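(* Let $\tau>0$, let $\Gamma^0$ be a closed polyhedral surface with $\boldsymbol X^0\in[\mathbb K^0]^3$ the identity and $\mathcal H^0\in\mathbb K^0$ given, and let $\alpha^m\ge0$ for all $m\ge0$. Suppose that for each $m\ge0$, $(\boldsymbol X^{m+1},V^{m+1},\beta_1^{m+1},\beta_2^{m+1},\mathcal H^{m+1})\in[\mathbb K^m]^3\times(\mathbb K^m)^4$ satisfies $$\Big(\tfrac{\boldsymbol X^{m+1}-\boldsymbol X^m}{\tau}\cdot\boldsymbol n^m,\phi^h\Big)^h_{\Gamma^m}=(V^{m+1},\phi^h)^h_{\Gamma^m}\quad\forall\phi^h\in\mathbb K^m,$$ $$\big((\boldsymbol X^{m+1}-\boldsymbol X^m)\cdot\boldsymbol\tau_i^m,\psi_i^h\big)^h_{\Gamma^m}=0,\quad i=1,2,\quad\forall\psi_1^h,\psi_2^h\in\mathbb K^m,$$ $$\Big(V^{m+1}\boldsymbol n^m+\alpha^m\sum_{i=1,2}\beta_i^{m+1}\boldsymbol\tau_i^m,\boldsymbol\omega^h\Big)^h_{\Gamma^m}=\Big\langle\mathcal H^{m+1}\mathbf A^m-\boldsymbol n^m(\nabla_\Gamma\mathcal H^{m+1})^T-\tfrac12(\mathcal H^{m+1})^2\nabla_\Gamma\boldsymbol X^{m+1},\nabla_\Gamma\boldsymbol\omega^h\Big\rangle^h_{\Gamma^m}\quad\forall\boldsymbol\omega^h\in[\mathbb K^m]^3,$$ $$(\mathcal H^{m+1}-\mathcal H^m,\varphi^h)^h_{\Gamma^m}=\big\langle\nabla_\Gamma(\boldsymbol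 X^{m+1}-\boldsymbol X^m),\boldsymbol n^m(\nabla_\Gamma\varphi^h)^T-\varphi^h\mathbf A^m\big\rangle^h_{\Gamma^m}\quad\forall\varphi^h\in\mathbb K^m,$$ and $\Gamma^{m+1}:=\boldsymbol X^{m+1}(\Gamma^m)$ is again a polyhedral surface with nondegenerate triangles. Then for every $\tau>0$ the discrete Willmore energy $W^m:=\frac12(\mathcal H^m,\mathcal H^m)^h_{\Gamma^m}$ satisfies $W^{m+1}\le W^m\le W^0$ for all $m\ge0$.
   Context: Polyhedral setting: $\Gamma^m=\bigcup_{j=1}^J\overline{\sigma_j^m}\subset\mathbb R^3$ is a closed polyhedral surface made of nonoverlapping nondegenerate triangles $\sigma_j^m$ with vertices $\boldsymbol q^m_{j_1},\boldsymbol q^m_{j_2},\boldsymbol q^m_{j_3}$, ordered so that $\mathcal J\{\sigma_j^m\}=(\boldsymbol q^m_{j_2}-\boldsymbol q^m_{j_1})\times(\boldsymbol q^m_{j_3}-\boldsymbol q^m_{j_1})$ points outward; $|\sigma_j^m|=\frac12|\mathcal J\{\sigma_j^m\}|$, and $\boldsymbol n^m|_{\sigma_j^m}=\mathcal J\{\sigma_j^m\}/|\mathcal J\{\sigma_j^m\}|$ (piecewise constant outward normal). Tangent fields: $\boldsymbol\tau_1^m|_{\sigma_j^m}=\frac{\boldsymbol q^m_{j_2}-\boldsymbol q^m_{j_1}}{|\boldsymbol q^m_{j_2}-\boldsymbol q^m_{j_1}|}$, $\boldsymbol\tau_2^m|_{\sigma_j^m}=\frac{\boldsymbol q^m_{j_3}-\boldsymbol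 q^m_{j_1}}{|\boldsymbol q^m_{j_3}-\boldsymbol q^m_{j_1}|}$. $\mathbb K^m$ is the space of continuous functions on $\Gamma^m$ that are affine on each triangle. $\boldsymbol X^m\in[\mathbb K^m]^3$ is the identity on $\Gamma^m$; $\boldsymbol X^{m+1}\in[\mathbb K^m]^3$ parameterizes $\Gamma^{m+1}$ with triangles $\sigma_j^{m+1}=\boldsymbol X^{m+1}(\sigma_j^m)$ (same connectivity), so functions in $\mathbb K^m$ and $\mathbb K^{m+1}$ are identified through their vertex values. Discrete surface gradient on $\Gamma^m$: for $g\in\mathbb K^m$, on a triangle $\sigma=\{\boldsymbol q_1,\boldsymbol q_2,\boldsymbol q_3\}$ with normal $\boldsymbol n$, $$\nabla_\Gamma g|_\sigma=\frac{g(\boldsymbol q_1)(\boldsymbol q_2-\boldsymbol q_3)\times\boldsymbol n+g(\boldsymbol q_2)(\boldsymbol q_3-\boldsymbol q_1)\times\boldsymbol n+g(\boldsymbol q_3)(\boldsymbol q_1-\boldsymbol q_2)\times\boldsymbol n}{|\mathcal J\{\sigma\}|};$$ for vector functions $\nabla_\Gamma\boldsymbol g$ is the matrix with $i$-th row $(\nabla_\Gamma g_i)^T$. $\mathbf A^m=\nabla_\Gamma\boldsymbol w^m$ where $\boldsymbol w^m\in[\mathbb K^m]^3$ is a given (vertex unit normal) field. Mass-lumped inner products: for scalar/vector functions $u,v$ continuous on each closed triangle, $$(u,v)^h_{\Gamma^m}=\tfrac13\sum_{j=1}^J\sum_{k=1}^3|\sigma_j^m|\,u((\boldsymbol q^m_{j_k})^-)\cdot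 v((\boldsymbol q^m_{j_k})^-),$$ and for matrix functions $\langle\boldsymbol U,\boldsymbol V\rangle^h_{\Gamma^m}=\tfrac13\sum_j\sum_k|\sigma_j^m|\,\boldsymbol U((\boldsymbol q^m_{j_k})^-):\boldsymbol V((\boldsymbol q^m_{j_k})^-)$, where $g((\boldsymbol q)^-)$ is the limit at vertex $\boldsymbol q$ from within $\sigma_j^m$ and $\boldsymbol U:\boldsymbol V=\mathrm{Tr}(\boldsymbol U^T\boldsymbol V)$. *)

theory Defs
  imports "HOL-Analysis.Analysis"
begin

(* Mesh data: vertices are indices 0..<NV, triangles are indices 0..<NT,
   T j k (k \<in> {0,1,2}) is the index of the k-th vertex of triangle j
   (k = 0,1,2 correspond to the paper's j_1, j_2, j_3).
   x :: nat \<Rightarrow> real^3 gives the vertex positions.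
   A function in K^m is given by its vertex values g :: nat \<Rightarrow> 'a.
   A piecewise (per-triangle) function evaluated at the vertices from within
   each triangle is represented as f :: nat \<Rightarrow> nat \<Rightarrow> 'a, f j k = value at
   vertex T j k from within triangle j. *)

definition Jac :: "(nat \<Rightarrow> real^3) \<Rightarrow> (nat \<Rightarrow> nat \<Rightarrow> nat) \<Rightarrow> nat \<Rightarrow> real^3" where
  "Jac x T j = cross3 (x (T j 1) - x (T j 0)) (x (T j 2) - x (T j 0))"

definition area :: "(nat \<Rightarrow> real^3) \<Rightarrow> (nat \<Rightarrow> nat \<Rightarrow> nat) \<Rightarrow> nat \<Rightarrow> real" where
  "area x T j = norm (Jac x T j) / 2"

definition nrm :: "(nat \<Rightarrow> real^3) \<Rightarrow> (nat \<Rightarrow> nat \<Rightarrow> nat) \<Rightarrow> nat \<Rightarrow> real^3" where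
  "nrm x T j = (1 / norm (Jac x T j)) *\<^sub>R Jac x T j"

definition tau1 :: "(nat \<Rightarrow> real^3) \<Rightarrow> (nat \<Rightarrow> nat \<Rightarrow> nat) \<Rightarrow> nat \<Rightarrow> real^3" where
  "tau1 x T j = (1 / norm (x (T j 1) - x (T j 0))) *\<^sub>R (x (T j 1) - x (T j 0))"

definition tau2 :: "(nat \<Rightarrow> real^3) \<Rightarrow> (nat \<Rightarrow> nat \<Rightarrow> nat) \<Rightarrow> nat \<Rightarrow> real^3" where
  "tau2 x T j = (1 / norm (x (T j 2) - x (T j 0))) *\<^sub>R (x (T j 2) - x (T j 0))"

definition gradS :: "(nat \<Rightarrow> real^3) \<Rightarrow> (nat \<Rightarrow> nat \<Rightarrow> nat) \<Rightarrow> nat \<Rightarrow> (nat \<Rightarrow> real) \<Rightarrow> real^3" where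
  "gradS x T j g =
     (1 / norm (Jac x T j)) *\<^sub>R
       (g (T j 0) *\<^sub>R cross3 (x (T j 1) - x (T j 2)) (nrm x T j)
      + g (T j 1) *\<^sub>R cross3 (x (T j 2) - x (T j 0)) (nrm x T j)
      + g (T j 2) *\<^sub>R cross3 (x (T j 0) - x (T j 1)) (nrm x T j))"

definition gradV :: "(nat \<Rightarrow> real^3) \<Rightarrow> (nat \<Rightarrow> nat \<Rightarrow> nat) \<Rightarrow> nat \<Rightarrow> (nat \<Rightarrow> real^3) \<Rightarrow> real^3^3" where
  "gradV x T j g = (\<chi> i. gradS x T j (\<lambda>v. g v $ i))"

definition outer :: "real^3 \<Rightarrow> real^3 \<Rightarrow> real^3^3" where
  "outer a b = (\<chi> i l. a $ i * b $ l)"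

definition frob :: "real^3^3 \<Rightarrow> real^3^3 \<Rightarrow> real" where
  "frob U V = (\<Sum>i\<in>UNIV. \<Sum>l\<in>UNIV. U $ i $ l * V $ i $ l)"

definition lump :: "(nat \<Rightarrow> real^3) \<Rightarrow> (nat \<Rightarrow> nat \<Rightarrow> nat) \<Rightarrow> nat \<Rightarrow> (nat \<Rightarrow> nat \<Rightarrow> real) \<Rightarrow> real" where
  "lump x T NT f = (1/3) * (\<Sum>j<NT. \<Sum>k<3. area x T j * f j k)"

definition ipS :: "(nat \<Rightarrow> real^3) \<Rightarrow> (nat \<Rightarrow> nat \<Rightarrow> nat) \<Rightarrow> nat \<Rightarrow> (nat \<Rightarrow> nat \<Rightarrow> real) \<Rightarrow> (nat \<Rightarrow> nat \<Rightarrow> real) \<Rightarrow> real" where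
  "ipS x T NT u v = lump x T NT (\<lambda>j k. u j k * v j k)"

definition ipV :: "(nat \<Rightarrow> real^3) \<Rightarrow> (nat \<Rightarrow> nat \<Rightarrow> nat) \<Rightarrow> nat \<Rightarrow> (nat \<Rightarrow> nat \<Rightarrow> real^3) \<Rightarrow> (nat \<Rightarrow> nat \<Rightarrow> real^3) \<Rightarrow> real" where
  "ipV x T NT u v = lump x T NT (\<lambda>j k. u j k \<bullet> v j k)"

definition ipM :: "(nat \<Rightarrow> real^3) \<Rightarrow> (nat \<Rightarrow> nat \<Rightarrow> nat) \<Rightarrow> nat \<Rightarrow> (nat \<Rightarrow> nat \<Rightarrow> real^3^3) \<Rightarrow> (nat \<Rightarrow> nat \<Rightarrow> real^3^3) \<Rightarrow> real" where
  "ipM x T NT U V = lump x T NT (\<lambda>j k. frob (U j k) (V j k))"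

definition vf :: "(nat \<Rightarrow> nat \<Rightarrow> nat) \<Rightarrow> (nat \<Rightarrow> 'a) \<Rightarrow> nat \<Rightarrow> nat \<Rightarrow> 'a" where
  "vf T g = (\<lambda>j k. g (T j k))"

definition tri_verts :: "(nat \<Rightarrow> nat \<Rightarrow> nat) \<Rightarrow> nat \<Rightarrow> nat set" where
  "tri_verts T j = {T j 0, T j 1, T j 2}"

definition has_edge :: "(nat \<Rightarrow> nat \<Rightarrow> nat) \<Rightarrow> nat \<Rightarrow> nat \<Rightarrow> nat \<Rightarrow> bool" where
  "has_edge T j a b = (\<exists>k<3. T j k = a \<and> T j ((k + 1) mod 3) = b)"

(* closed, coherently oriented polyhedral surface made of nonoverlapping
   nondegenerate triangles *)
definition poly_surface :: "nat \<Rightarrow> nat \<Rightarrow> (nat \<Rightarrow> nat \<Rightarrow> nat) \<Rightarrow> (nat \<Rightarrow> real^3) \<Rightarrow> bool" where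
  "poly_surface NV NT T x \<longleftrightarrow>
     0 < NT \<and>
     (\<forall>j<NT. \<forall>k<3. T j k < NV) \<and>
     (\<forall>v<NV. \<exists>j<NT. v \<in> tri_verts T j) \<and>
     inj_on x {..<NV} \<and>
     (\<forall>j<NT. Jac x T j \<noteq> 0) \<and>
     (\<forall>j<NT. \<forall>j'<NT. j \<noteq> j' \<longrightarrow> tri_verts T j \<noteq> tri_verts T j') \<and>
     (\<forall>j<NT. \<forall>j'<NT. j \<noteq> j' \<longrightarrow>
        convex hull (x ` tri_verts T j) \<inter> convex hull (x ` tri_verts T j')
          = convex hull (x ` (tri_verts T j \<inter> tri_verts T j'))) \<and>
     (\<forall>j<NT. \<forall>k<3.
        (\<exists>!j'. j' < NT \<and> has_edge T j' (T j k) (T j ((k + 1) mod 3))) \<and>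
        (\<exists>!j'. j' < NT \<and> has_edge T j' (T j ((k + 1) mod 3)) (T j k)))"

definition willmore :: "(nat \<Rightarrow> real^3) \<Rightarrow> (nat \<Rightarrow> nat \<Rightarrow> nat) \<Rightarrow> nat \<Rightarrow> (nat \<Rightarrow> real) \<Rightarrow> real" where
  "willmore x T NT H = 1/2 * ipS x T NT (vf T H) (vf T H)"

end

theory Submission
  imports Defs
begin


lemma lagrange3: "(cross3 a b) \<bullet> (cross3 c d) = (a\<bullet>c)*(b\<bullet>d) - (a\<bullet>d)*(b\<bullet>c)"
  by (simp add: cross3_simps)

lemma cross_n_dot:
  assumes "n \<bullet> n = 1" "u \<bullet> n = 0" "v \<bullet> n = 0"
  shows "cross3 u n \<bullet> cross3 v n = u \<bullet> v"
  using assms by (simp add: lagrange3 inner_commute)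

lemma norm_cross_le: "norm (cross3 a b) \<le> norm a * norm b"
proof -
  have "(norm (cross3 a b))\<^sup>2 \<le> (norm a * norm b)\<^sup>2"
    using norm_cross_dot[of a b] by (metis le_add_same_cancel1 zero_le_power2)
  then show ?thesis by (simp add: power_mono_iff)
qed

definition Phi :: "real^3 \<Rightarrow> real^3 \<Rightarrow> real^3 \<Rightarrow> real^3 \<Rightarrow> real^3 \<Rightarrow> real^3 \<Rightarrow> real" where
  "Phi e1 e2 d1 d2 f1 f2 = (d1\<bullet>f1)*(e2\<bullet>e2) - ((d1\<bullet>f2)+(d2\<bullet>f1))*(e1\<bullet>e2) + (d2\<bullet>f2)*(e1\<bullet>e1)"

lemma amgm_tri:
  fixes e1 e2 d1 d2 :: "real^3"
  shows "2 * norm (cross3 e1 e2) * norm (cross3 d1 d2) \<le> Phi e1 e2 d1 d2 d1 d2"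
proof (cases "e1 = 0")
  case True
  then show ?thesis by (simp add: Phi_def)
next
  case False
  define a where "a = e1 \<bullet> e1"
  have apos: "a > 0" using False by (simp add: a_def)
  define h where "h = a *\<^sub>R d2 - (e1 \<bullet> e2) *\<^sub>R d1"
  define J where "J = norm (cross3 e1 e2)"
  define J' where "J' = norm (cross3 d1 d2)"
  have J2: "J^2 = a * (e2\<bullet>e2) - (e1\<bullet>e2)^2"
    using norm_cross_dot[of e1 e2] unfolding J_def a_def
    by (simp add: power_mult_distrib power2_norm_eq_inner algebra_simps)
  have hh: "h \<bullet> h = a^2 * (d2\<bullet>d2) - 2*a*(e1\<bullet>e2)*(d1\<bullet>d2) + (e1\<bullet>e2)^2*(d1\<bullet>d1)"
    unfolding h_def by (simp add: inner_diff_left inner_diff_right inner_commute algebra_simps power2_eq_square)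
  have key: "a * Phi e1 e2 d1 d2 d1 d2 = h \<bullet> h + (d1\<bullet>d1) * J^2"
    unfolding hh J2 Phi_def a_def by (simp add: algebra_simps power2_eq_square inner_commute)
  have dh: "cross3 d1 h = a *\<^sub>R cross3 d1 d2"
    unfolding h_def by (simp add: Cross3.right_diff_distrib cross_mult_right)
  have "a * J' = norm (cross3 d1 h)" unfolding dh J'_def using apos by simp
  also have "\<dots> \<le> norm d1 * norm h" by (rule norm_cross_le)
  finally have aJ': "a * J' \<le> norm d1 * norm h" .
  have J0: "J \<ge> 0" by (simp add: J_def)
  have "2 * J * (a * J') \<le> 2 * J * (norm d1 * norm h)"
    using aJ' J0 by (simp add: mult_left_mono)
  also have "\<dots> \<le> (J * norm d1)^2 + (norm h)^2"
    using sum_squares_bound[of "J * norm d1" "norm h"] by (simp add: algebra_simps)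
  also have "\<dots> = a * Phi e1 e2 d1 d2 d1 d2"
    unfolding key by (simp add: power_mult_distrib power2_norm_eq_inner algebra_simps)
  finally have "a * (2 * J * J') \<le> a * Phi e1 e2 d1 d2 d1 d2" by (simp add: algebra_simps)
  then show ?thesis using apos unfolding J_def J'_def by simp
qed

lemma cross_comb:
  fixes q0 q1 q2 n :: "real^3"
  shows "g0 *\<^sub>R cross3 (q1 - q2) n + g1 *\<^sub>R cross3 (q2 - q0) n + g2 *\<^sub>R cross3 (q0 - q1) n
    = (g1 - g0) *\<^sub>R cross3 (q2 - q0) n - (g2 - g0) *\<^sub>R cross3 (q1 - q0) n"
  by (simp add: cross3_simps)

lemma nrm_props:
  assumes "Jac x T j \<noteq> 0"
  shows "nrm x T j \<bullet> nrm x T j = 1"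
    "(x (T j 1) - x (T j 0)) \<bullet> nrm x T j = 0"
    "(x (T j 2) - x (T j 0)) \<bullet> nrm x T j = 0"
  using assms
  by (auto simp: nrm_def Jac_def dot_cross_self inner_commute power2_norm_eq_inner[symmetric] power2_eq_square)

lemma gradS_dot:
  assumes J: "Jac x T j \<noteq> 0"
  defines "e1 \<equiv> x (T j 1) - x (T j 0)" and "e2 \<equiv> x (T j 2) - x (T j 0)"
  shows "(gradS x T j g \<bullet> gradS x T j h) * (norm (Jac x T j))^2
     = (g (T j 1) - g (T j 0)) * (h (T j 1) - h (T j 0)) * (e2 \<bullet> e2)
       - ((g (T j 1) - g (T j 0)) * (h (T j 2) - h (T j 0)) + (g (T j 2) - g (T j 0)) * (h (T j 1) - h (T j 0))) * (e1 \<bullet> e2)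
       + (g (T j 2) - g (T j 0)) * (h (T j 2) - h (T j 0)) * (e1 \<bullet> e1)"
proof -
  define n where "n = nrm x T j"
  define c where "c = 1 / norm (Jac x T j)"
  have nn: "n \<bullet> n = 1" "e1 \<bullet> n = 0" "e2 \<bullet> n = 0"
    using nrm_props[OF J] unfolding n_def e1_def e2_def by auto
  have gs: "\<And>g. gradS x T j g = c *\<^sub>R ((g (T j 1) - g (T j 0)) *\<^sub>R cross3 e2 n - (g (T j 2) - g (T j 0)) *\<^sub>R cross3 e1 n)"
    unfolding gradS_def c_def n_def e1_def e2_def using cross_comb by metis
  have d22: "cross3 e2 n \<bullet> cross3 e2 n = e2 \<bullet> e2" and d11: "cross3 e1 n \<bullet> cross3 e1 n = e1 \<bullet> e1"
    and d12: "cross3 e1 n \<bullet> cross3 e2 n = e1 \<bullet> e2" and d21: "cross3 e2 n \<bullet> cross3 e1 n = e1 \<bullet> e2"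
    using cross_n_dot[OF nn(1)] nn by (auto simp: inner_commute)
  have cJ: "c^2 * (norm (Jac x T j))^2 = 1" using J by (simp add: c_def power_divide)
  define a1 where "a1 = g (T j 1) - g (T j 0)"
  define a2 where "a2 = g (T j 2) - g (T j 0)"
  define bA where "bA = h (T j 1) - h (T j 0)"
  define bB where "bB = h (T j 2) - h (T j 0)"
  have "gradS x T j g \<bullet> gradS x T j h = c^2 * (a1 * bA * (e2 \<bullet> e2) - (a1 * bB + a2 * bA) * (e1 \<bullet> e2) + a2 * bB * (e1 \<bullet> e1))"
    unfolding gs a1_def[symmetric] a2_def[symmetric] bA_def[symmetric] bB_def[symmetric]
      inner_diff_left inner_diff_right inner_scaleR_left inner_scaleR_right d11 d12 d21 d22
    by (simp add: algebra_simps power2_eq_square)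
  then have "(gradS x T j g \<bullet> gradS x T j h) * (norm (Jac x T j))^2 = (c^2 * (norm (Jac x T j))^2) * (a1 * bA * (e2 \<bullet> e2) - (a1 * bB + a2 * bA) * (e1 \<bullet> e2) + a2 * bB * (e1 \<bullet> e1))"
    by simp
  then show ?thesis unfolding cJ a1_def a2_def bA_def bB_def by simp
qed

lemma frob_inner: "frob U V = (\<Sum>i\<in>UNIV. U $ i \<bullet> V $ i)"
  by (simp add: frob_def inner_vec_def)

lemma frob_gradV:
  assumes J: "Jac x T j \<noteq> 0"
  defines "e1 \<equiv> x (T j 1) - x (T j 0)" and "e2 \<equiv> x (T j 2) - x (T j 0)"
  shows "frob (gradV x T j g) (gradV x T j h) * (norm (Jac x T j))^2
     = Phi e1 e2 (g (T j 1) - g (T j 0)) (g (T j 2) - g (T j 0)) (h (T j 1) - h (T j 0)) (h (T j 2) - h (T j 0))"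
proof -
  have "frob (gradV x T j g) (gradV x T j h) * (norm (Jac x T j))^2
     = (\<Sum>i\<in>UNIV. (gradS x T j (\<lambda>v. g v $ i) \<bullet> gradS x T j (\<lambda>v. h v $ i)) * (norm (Jac x T j))^2)"
    by (simp add: frob_inner gradV_def sum_distrib_right)
  also have "\<dots> = Phi e1 e2 (g (T j 1) - g (T j 0)) (g (T j 2) - g (T j 0)) (h (T j 1) - h (T j 0)) (h (T j 2) - h (T j 0))"
    unfolding gradS_dot[OF J] e1_def[symmetric] e2_def[symmetric] Phi_def
    by (simp add: inner_vec_def sum_3 algebra_simps)
  finally show ?thesis .
qed

lemma frob_self_nonneg: "frob U U \<ge> 0"
  unfolding frob_def by (intro sum_nonneg) (simp)

lemma Phi_polar:
  "Phi e1 e2 p1 p2 (p1 - e1) (p2 - e2) = Phi e1 e2 p1 p2 p1 p2 / 2 - Phi e1 e2 e1 e2 e1 e2 / 2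
     + Phi e1 e2 (p1 - e1) (p2 - e2) (p1 - e1) (p2 - e2) / 2"
  unfolding Phi_def inner_diff_left inner_diff_right
    inner_commute[of p1 e1] inner_commute[of p2 e2] inner_commute[of p1 e2] inner_commute[of p2 e1] inner_commute[of p2 p1] inner_commute[of e2 e1]
  by (simp add: field_simps)

lemma Phi_self: "Phi e1 e2 e1 e2 e1 e2 = 2 * (norm (cross3 e1 e2))^2"
proof -
  have "(norm (cross3 e1 e2))^2 = (e1 \<bullet> e1) * (e2 \<bullet> e2) - (e1 \<bullet> e2)^2"
    using norm_cross_dot[of e1 e2] by (simp add: power_mult_distrib power2_norm_eq_inner)
  then show ?thesis unfolding Phi_def by (simp add: power2_eq_square inner_commute[of e2 e1] algebra_simps)
qed

lemma tri_ineq: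
  assumes J: "Jac x T j \<noteq> 0"
  shows "area x T j * frob (gradV x T j y) (gradV x T j (\<lambda>v. y v - x v)) \<ge> area y T j - area x T j"
proof -
  define e1 where "e1 = x (T j 1) - x (T j 0)"
  define e2 where "e2 = x (T j 2) - x (T j 0)"
  define p1 where "p1 = y (T j 1) - y (T j 0)"
  define p2 where "p2 = y (T j 2) - y (T j 0)"
  define JJ where "JJ = norm (Jac x T j)"
  define J' where "J' = norm (Jac y T j)"
  have JJpos: "JJ > 0" using J by (simp add: JJ_def)
  have JJe: "JJ = norm (cross3 e1 e2)" by (simp add: JJ_def Jac_def e1_def e2_def)
  have J'e: "J' = norm (cross3 p1 p2)" by (simp add: J'_def Jac_def p1_def p2_def)
  have dd1: "(y (T j 1) - x (T j 1)) - (y (T j 0) - x (T j 0)) = p1 - e1" by (simp add: p1_def e1_def)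
  have dd2: "(y (T j 2) - x (T j 2)) - (y (T j 0) - x (T j 0)) = p2 - e2" by (simp add: p2_def e2_def)
  have F1': "frob (gradV x T j y) (gradV x T j (\<lambda>v. y v - x v)) * JJ^2 = Phi e1 e2 p1 p2
      ((y (T j 1) - x (T j 1)) - (y (T j 0) - x (T j 0))) ((y (T j 2) - x (T j 2)) - (y (T j 0) - x (T j 0)))"
    using frob_gradV[OF J, of y "\<lambda>v. y v - x v"]
    unfolding JJ_def e1_def e2_def p1_def p2_def by simp
  have F1: "frob (gradV x T j y) (gradV x T j (\<lambda>v. y v - x v)) * JJ^2 = Phi e1 e2 p1 p2 (p1 - e1) (p2 - e2)"
    using F1' unfolding dd1 dd2 .
  have F2: "frob (gradV x T j (\<lambda>v. y v - x v)) (gradV x T j (\<lambda>v. y v - x v)) * JJ^2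
      = Phi e1 e2 ((y (T j 1) - x (T j 1)) - (y (T j 0) - x (T j 0))) ((y (T j 2) - x (T j 2)) - (y (T j 0) - x (T j 0)))
          ((y (T j 1) - x (T j 1)) - (y (T j 0) - x (T j 0))) ((y (T j 2) - x (T j 2)) - (y (T j 0) - x (T j 0)))"
    using frob_gradV[OF J, of "\<lambda>v. y v - x v" "\<lambda>v. y v - x v"]
    unfolding JJ_def e1_def e2_def by simp
  have P2: "Phi e1 e2 (p1 - e1) (p2 - e2) (p1 - e1) (p2 - e2) \<ge> 0"
    using F2[unfolded dd1 dd2, symmetric] frob_self_nonneg by simp
  have AM: "2 * JJ * J' \<le> Phi e1 e2 p1 p2 p1 p2" using amgm_tri[of e1 e2 p1 p2] JJe J'e by simp
  have "Phi e1 e2 p1 p2 (p1 - e1) (p2 - e2) \<ge> JJ * J' - JJ^2"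
    using Phi_polar[of e1 e2 p1 p2] Phi_self[of e1 e2] JJe AM P2 by simp
  then have h: "frob (gradV x T j y) (gradV x T j (\<lambda>v. y v - x v)) * JJ^2 \<ge> JJ * (J' - JJ)"
    using F1 by (simp add: algebra_simps power2_eq_square)
  have "frob (gradV x T j y) (gradV x T j (\<lambda>v. y v - x v)) * JJ \<ge> J' - JJ"
  proof -
    let ?f = "frob (gradV x T j y) (gradV x T j (\<lambda>v. y v - x v))"
    have "JJ * (J' - JJ) \<le> JJ * (?f * JJ)" using h by (simp add: power2_eq_square algebra_simps)
    then show "?f * JJ \<ge> J' - JJ" using JJpos by (meson mult_left_le_imp_le)
  qed
  then show ?thesis unfolding area_def JJ_def[symmetric] J'_def[symmetric] by (simp add: algebra_simps)
qed

definition WS :: "(nat \<Rightarrow> real) \<Rightarrow> nat \<Rightarrow> (nat \<Rightarrow> nat \<Rightarrow> real) \<Rightarrow> real" where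
  "WS w NT f = (\<Sum>j<NT. \<Sum>k<3. w j * f j k)"

lemma lump_WS: "lump x T NT f = WS (area x T) NT f / 3"
  by (simp add: lump_def WS_def)

lemma WS_add: "WS w NT (\<lambda>j k. f j k + g j k) = WS w NT f + WS w NT g"
  by (simp add: WS_def sum.distrib algebra_simps)

lemma WS_diff: "WS w NT (\<lambda>j k. f j k - g j k) = WS w NT f - WS w NT g"
  by (simp add: WS_def sum_subtractf algebra_simps)

lemma WS_scale: "WS w NT (\<lambda>j k. c * f j k) = c * WS w NT f"
  by (simp add: WS_def sum_distrib_left algebra_simps)

lemma WS_cong: "(\<And>j k. j < NT \<Longrightarrow> k < 3 \<Longrightarrow> f j k = g j k) \<Longrightarrow> WS w NT f = WS w NT g"
  by (simp add: WS_def)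

lemma WS_mono: "(\<And>j k. j < NT \<Longrightarrow> k < 3 \<Longrightarrow> w j * f j k \<le> w j * g j k) \<Longrightarrow> WS w NT f \<le> WS w NT g"
  unfolding WS_def by (intro sum_mono) auto

lemma WS_nonneg: "(\<And>j k. j < NT \<Longrightarrow> k < 3 \<Longrightarrow> w j * f j k \<ge> 0) \<Longrightarrow> WS w NT f \<ge> 0"
  unfolding WS_def by (intro sum_nonneg) auto

lemma frob_sym: "frob U V = frob V U"
  by (simp add: frob_def mult.commute)

lemma frob_diff_right: "frob U (V - W) = frob U V - frob U W"
  by (simp add: frob_def sum_subtractf algebra_simps)

lemma frob_diff_left: "frob (U - V) W = frob U W - frob V W"
  by (simp add: frob_def sum_subtractf algebra_simps)

lemma frob_add_left: "frob (U + V) W = frob U W + frob V W"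
  by (simp add: frob_def sum.distrib algebra_simps)

lemma frob_add_right: "frob W (U + V) = frob W U + frob W V"
  by (simp add: frob_def sum.distrib algebra_simps)

lemma frob_scale_left: "frob (c *\<^sub>R U) W = c * frob U W"
  by (simp add: frob_def sum_distrib_left algebra_simps)

lemma frob_scale_right: "frob W (c *\<^sub>R U) = c * frob W U"
  by (simp add: frob_def sum_distrib_left algebra_simps)

lemma area_nonneg: "area x T j \<ge> 0" by (simp add: area_def)

lemma step:
  fixes x y wm :: "nat \<Rightarrow> real^3" and a b V' bA bB :: "nat \<Rightarrow> real" and \<alpha> \<tau> :: real
  assumes tau: "\<tau> > 0"
   and J: "\<forall>j<NT. Jac x T j \<noteq> 0"
   and h1: "ipS x T NT (\<lambda>j k. ((1 / \<tau>) *\<^sub>R (y (T j k) - x (T j k))) \<bullet> nrm x T j) (vf T V')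
            = ipS x T NT (vf T V') (vf T V')"
   and h2a: "ipS x T NT (\<lambda>j k. (y (T j k) - x (T j k)) \<bullet> tau1 x T j) (vf T bA) = 0"
   and h2b: "ipS x T NT (\<lambda>j k. (y (T j k) - x (T j k)) \<bullet> tau2 x T j) (vf T bB) = 0"
   and h3: "ipV x T NT (\<lambda>j k. V' (T j k) *\<^sub>R nrm x T j
            + \<alpha> *\<^sub>R (bA (T j k) *\<^sub>R tau1 x T j + bB (T j k) *\<^sub>R tau2 x T j)) (vf T (\<lambda>v. y v - x v))
       = ipM x T NT (\<lambda>j k. a (T j k) *\<^sub>R gradV x T j wm - outer (nrm x T j) (gradS x T j a)
            - (1/2 * (a (T j k))\<^sup>2) *\<^sub>R gradV x T j y) (\<lambda>j k. gradV x T j (\<lambda>v. y v - x v))"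
   and h4: "ipS x T NT (vf T (\<lambda>v. a v - b v)) (vf T a)
       = ipM x T NT (\<lambda>j k. gradV x T j (\<lambda>v. y v - x v))
           (\<lambda>j k. outer (nrm x T j) (gradS x T j a) - a (T j k) *\<^sub>R gradV x T j wm)"
  shows "willmore y T NT a \<le> willmore x T NT b"
proof -
  define ar where "ar = area x T"
  define nd where "nd = (\<lambda>j k. (y (T j k) - x (T j k)) \<bullet> nrm x T j)"
  define t1 where "t1 = (\<lambda>j k. (y (T j k) - x (T j k)) \<bullet> tau1 x T j)"
  define t2 where "t2 = (\<lambda>j k. (y (T j k) - x (T j k)) \<bullet> tau2 x T j)"
  define fr where "fr = (\<lambda>j. frob (gradV x T j y) (gradV x T j (\<lambda>v. y v - x v)))"
  have arnn: "\<And>j. ar j \<ge> 0" by (simp add: ar_def area_nonneg)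
  have A0: "WS ar NT (\<lambda>j k. (1/\<tau>) * (V' (T j k) * nd j k)) = WS ar NT (\<lambda>j k. V' (T j k) * V' (T j k))"
    using h1 unfolding ipS_def lump_WS ar_def[symmetric] vf_def
    by (simp add: nd_def inner_commute algebra_simps)
  have A: "WS ar NT (\<lambda>j k. V' (T j k) * nd j k) = \<tau> * WS ar NT (\<lambda>j k. V' (T j k) * V' (T j k))"
    using A0 tau unfolding WS_scale by (simp add: field_simps)
  have B1: "WS ar NT (\<lambda>j k. bA (T j k) * t1 j k) = 0"
    using h2a unfolding ipS_def lump_WS ar_def[symmetric] vf_def t1_def by (simp add: mult.commute)
  have B2: "WS ar NT (\<lambda>j k. bB (T j k) * t2 j k) = 0"
    using h2b unfolding ipS_def lump_WS ar_def[symmetric] vf_def t2_def by (simp add: mult.commute)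
  have h3': "WS ar NT (\<lambda>j k. V' (T j k) * nd j k + (\<alpha> * (bA (T j k) * t1 j k) + \<alpha> * (bB (T j k) * t2 j k)))
     = WS ar NT (\<lambda>j k. frob (a (T j k) *\<^sub>R gradV x T j wm - outer (nrm x T j) (gradS x T j a)
            - (1/2 * (a (T j k))\<^sup>2) *\<^sub>R gradV x T j y) (gradV x T j (\<lambda>v. y v - x v)))"
    using h3 unfolding ipV_def ipM_def lump_WS ar_def[symmetric] vf_def nd_def t1_def t2_def
    by (simp add: inner_add_left inner_scaleR_left inner_commute algebra_simps)
  have h4': "WS ar NT (\<lambda>j k. (a (T j k) - b (T j k)) * a (T j k))
     = WS ar NT (\<lambda>j k. frob (gradV x T j (\<lambda>v. y v - x v))
           (outer (nrm x T j) (gradS x T j a) - a (T j k) *\<^sub>R gradV x T j wm))"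
    using h4 unfolding ipS_def ipM_def lump_WS ar_def[symmetric] vf_def by simp
  have V3: "WS ar NT (\<lambda>j k. V' (T j k) * nd j k + (\<alpha> * (bA (T j k) * t1 j k) + \<alpha> * (bB (T j k) * t2 j k)))
      = \<tau> * WS ar NT (\<lambda>j k. V' (T j k) * V' (T j k))"
    unfolding WS_add WS_scale A B1 B2 by simp
  have Vnn: "WS ar NT (\<lambda>j k. V' (T j k) * V' (T j k)) \<ge> 0"
    by (rule WS_nonneg) (simp add: arnn)
  have C: "WS ar NT (\<lambda>j k. (a (T j k) - b (T j k)) * a (T j k))
      + WS ar NT (\<lambda>j k. V' (T j k) * nd j k + (\<alpha> * (bA (T j k) * t1 j k) + \<alpha> * (bB (T j k) * t2 j k)))
      = WS ar NT (\<lambda>j k. - (1/2 * (a (T j k))\<^sup>2) * fr j)"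
    unfolding h4' h3' WS_add[symmetric]
    by (rule WS_cong) (simp add: fr_def frob_diff_left frob_diff_right frob_add_left frob_add_right frob_scale_left frob_scale_right frob_sym[of "gradV x T _ _" "outer _ _"] frob_sym[of "gradV x T _ (\<lambda>v. y v - x v)" "gradV x T _ wm"] algebra_simps)
  have D: "WS ar NT (\<lambda>j k. - (1/2 * (a (T j k))\<^sup>2) * fr j)
     \<le> WS ar NT (\<lambda>j k. 1/2 * (a (T j k))\<^sup>2) - WS (area y T) NT (\<lambda>j k. 1/2 * (a (T j k))\<^sup>2)"
  proof -
    have "WS ar NT (\<lambda>j k. - (1/2 * (a (T j k))\<^sup>2) * fr j)
       \<le> (\<Sum>j<NT. \<Sum>k<3. ar j * (1/2 * (a (T j k))\<^sup>2) - area y T j * (1/2 * (a (T j k))\<^sup>2))"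
      unfolding WS_def
    proof (intro sum_mono)
      fix j k assume j: "j \<in> {..<NT}" and k: "k \<in> {..<(3::nat)}"
      have ti: "ar j * fr j \<ge> area y T j - ar j"
        using tri_ineq[of x T j y] J j unfolding ar_def fr_def by auto
      have c0: "1/2 * (a (T j k))\<^sup>2 \<ge> 0" by simp
      have "(1/2 * (a (T j k))\<^sup>2) * (area y T j - ar j) \<le> (1/2 * (a (T j k))\<^sup>2) * (ar j * fr j)"
        using mult_left_mono[OF ti c0] .
      then show "ar j * (- (1/2 * (a (T j k))\<^sup>2) * fr j) \<le> ar j * (1/2 * (a (T j k))\<^sup>2) - area y T j * (1/2 * (a (T j k))\<^sup>2)"
        by (simp add: algebra_simps)
    qed
    also have "\<dots> = WS ar NT (\<lambda>j k. 1/2 * (a (T j k))\<^sup>2) - WS (area y T) NT (\<lambda>j k. 1/2 * (a (T j k))\<^sup>2)"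
      unfolding WS_def by (simp add: sum_subtractf)
    finally show ?thesis .
  qed
  have E: "WS ar NT (\<lambda>j k. (a (T j k) - b (T j k)) * a (T j k))
      \<ge> WS ar NT (\<lambda>j k. 1/2 * (a (T j k))\<^sup>2) - WS ar NT (\<lambda>j k. 1/2 * (b (T j k))\<^sup>2)"
  proof -
    have "WS ar NT (\<lambda>j k. 1/2 * (a (T j k))\<^sup>2 - 1/2 * (b (T j k))\<^sup>2) \<le> WS ar NT (\<lambda>j k. (a (T j k) - b (T j k)) * a (T j k))"
    proof (rule WS_mono)
      fix j k
      have "1/2 * (a (T j k))\<^sup>2 - 1/2 * (b (T j k))\<^sup>2 \<le> (a (T j k) - b (T j k)) * a (T j k)"
        using sum_squares_bound[of "a (T j k)" "b (T j k)"] by (simp add: algebra_simps power2_eq_square)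
      then show "ar j * (1/2 * (a (T j k))\<^sup>2 - 1/2 * (b (T j k))\<^sup>2) \<le> ar j * ((a (T j k) - b (T j k)) * a (T j k))"
        using arnn by (simp add: mult_left_mono)
    qed
    then show ?thesis unfolding WS_diff .
  qed
  have F: "WS (area y T) NT (\<lambda>j k. 1/2 * (a (T j k))\<^sup>2) \<le> WS ar NT (\<lambda>j k. 1/2 * (b (T j k))\<^sup>2)"
    using C D E V3 Vnn tau by (smt (verit) mult_nonneg_nonneg)
  have F2: "1/2 * WS (area y T) NT (\<lambda>j k. a (T j k) * a (T j k)) \<le> 1/2 * WS ar NT (\<lambda>j k. b (T j k) * b (T j k))"
    using F unfolding power2_eq_square WS_scale .
  show ?thesis
    using F2 unfolding willmore_def ipS_def lump_WS vf_def ar_def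
    by simp
qed



lemma poly_Jac: "poly_surface NV NT T x \<Longrightarrow> \<forall>j<NT. Jac x T j \<noteq> 0"
  unfolding poly_surface_def by (elim conjE) assumption

theorem theorem5p1:
  fixes NV NT :: nat and T :: "nat \<Rightarrow> nat \<Rightarrow> nat"
    and \<tau> :: real and \<alpha> :: "nat \<Rightarrow> real"
    and X :: "nat \<Rightarrow> nat \<Rightarrow> real^3"
    and V \<beta>1 \<beta>2 H :: "nat \<Rightarrow> nat \<Rightarrow> real"
    and w :: "nat \<Rightarrow> nat \<Rightarrow> real^3"
  assumes tau_pos: "\<tau> > 0"
    and alpha_nonneg: "\<forall>m. \<alpha> m \<ge> 0"
    and surf: "\<forall>m. poly_surface NV NT T (X m)"
    and w_unit: "\<forall>m. \<forall>v<NV. norm (w m v) = 1"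
    and eq1: "\<forall>m. \<forall>\<phi> :: nat \<Rightarrow> real.
       ipS (X m) T NT
         (\<lambda>j k. ((1 / \<tau>) *\<^sub>R (X (Suc m) (T j k) - X m (T j k))) \<bullet> nrm (X m) T j)
         (vf T \<phi>)
       = ipS (X m) T NT (vf T (V (Suc m))) (vf T \<phi>)"
    and eq2a: "\<forall>m. \<forall>\<psi> :: nat \<Rightarrow> real.
       ipS (X m) T NT
         (\<lambda>j k. (X (Suc m) (T j k) - X m (T j k)) \<bullet> tau1 (X m) T j)
         (vf T \<psi>) = 0"
    and eq2b: "\<forall>m. \<forall>\<psi> :: nat \<Rightarrow> real.
       ipS (X m) T NT
         (\<lambda>j k. (X (Suc m) (T j k) - X m (T j k)) \<bullet> tau2 (X m) T j)
         (vf T \<psi>) = 0"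
    and eq3: "\<forall>m. \<forall>\<omega> :: nat \<Rightarrow> real^3.
       ipV (X m) T NT
         (\<lambda>j k. V (Suc m) (T j k) *\<^sub>R nrm (X m) T j
            + \<alpha> m *\<^sub>R (\<beta>1 (Suc m) (T j k) *\<^sub>R tau1 (X m) T j
                         + \<beta>2 (Suc m) (T j k) *\<^sub>R tau2 (X m) T j))
         (vf T \<omega>)
       = ipM (X m) T NT
         (\<lambda>j k. H (Suc m) (T j k) *\<^sub>R gradV (X m) T j (w m)
            - outer (nrm (X m) T j) (gradS (X m) T j (H (Suc m)))
            - (1/2 * (H (Suc m) (T j k))\<^sup>2) *\<^sub>R gradV (X m) T j (X (Suc m)))
         (\<lambda>j k. gradV (X m) T j \<omega>)"
    and eq4: "\<forall>m. \<forall>\<phi> :: nat \<Rightarrow> real.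
       ipS (X m) T NT (vf T (\<lambda>v. H (Suc m) v - H m v)) (vf T \<phi>)
       = ipM (X m) T NT
         (\<lambda>j k. gradV (X m) T j (\<lambda>v. X (Suc m) v - X m v))
         (\<lambda>j k. outer (nrm (X m) T j) (gradS (X m) T j \<phi>)
                 - \<phi> (T j k) *\<^sub>R gradV (X m) T j (w m))"
  shows "\<forall>m. willmore (X (Suc m)) T NT (H (Suc m)) \<le> willmore (X m) T NT (H m)
           \<and> willmore (X m) T NT (H m) \<le> willmore (X 0) T NT (H 0)"
proof -
  have stepm: "willmore (X (Suc m)) T NT (H (Suc m)) \<le> willmore (X m) T NT (H m)" for m
  proof (rule step[where \<tau>=\<tau> and V'="V (Suc m)" and bA="\<beta>1 (Suc m)" and bB="\<beta>2 (Suc m)"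
      and \<alpha>="\<alpha> m" and wm="w m"])
    show "\<tau> > 0" by (rule tau_pos)
    show "\<forall>j<NT. Jac (X m) T j \<noteq> 0" using surf[rule_format, of m] by (rule poly_Jac)
    show "ipS (X m) T NT (\<lambda>j k. ((1 / \<tau>) *\<^sub>R (X (Suc m) (T j k) - X m (T j k))) \<bullet> nrm (X m) T j) (vf T (V (Suc m)))
            = ipS (X m) T NT (vf T (V (Suc m))) (vf T (V (Suc m)))" by (rule eq1[rule_format])
    show "ipS (X m) T NT (\<lambda>j k. (X (Suc m) (T j k) - X m (T j k)) \<bullet> tau1 (X m) T j) (vf T (\<beta>1 (Suc m))) = 0"
      by (rule eq2a[rule_format])
    show "ipS (X m) T NT (\<lambda>j k. (X (Suc m) (T j k) - X m (T j k)) \<bullet> tau2 (X m) T j) (vf T (\<beta>2 (Suc m))) = 0"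
      by (rule eq2b[rule_format])
    show "ipV (X m) T NT (\<lambda>j k. V (Suc m) (T j k) *\<^sub>R nrm (X m) T j
            + \<alpha> m *\<^sub>R (\<beta>1 (Suc m) (T j k) *\<^sub>R tau1 (X m) T j + \<beta>2 (Suc m) (T j k) *\<^sub>R tau2 (X m) T j))
            (vf T (\<lambda>v. X (Suc m) v - X m v))
       = ipM (X m) T NT (\<lambda>j k. H (Suc m) (T j k) *\<^sub>R gradV (X m) T j (w m) - outer (nrm (X m) T j) (gradS (X m) T j (H (Suc m)))
            - (1/2 * (H (Suc m) (T j k))\<^sup>2) *\<^sub>R gradV (X m) T j (X (Suc m))) (\<lambda>j k. gradV (X m) T j (\<lambda>v. X (Suc m) v - X m v))"
      by (rule eq3[rule_format])
    show "ipS (X m) T NT (vf T (\<lambda>v. H (Suc m) v - H m v)) (vf T (H (Suc m)))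
       = ipM (X m) T NT (\<lambda>j k. gradV (X m) T j (\<lambda>v. X (Suc m) v - X m v))
           (\<lambda>j k. outer (nrm (X m) T j) (gradS (X m) T j (H (Suc m))) - H (Suc m) (T j k) *\<^sub>R gradV (X m) T j (w m))"
      by (rule eq4[rule_format])
  qed
  have chain: "willmore (X m) T NT (H m) \<le> willmore (X 0) T NT (H 0)" for m
  proof (induction m)
    case 0 then show ?case by simp
  next
    case (Suc m) then show ?case using stepm[of m] by linarith
  qed
  show ?thesis using stepm chain by blast
qed

end
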